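(* Let $X$ be a Banach lattice and $S$ a convex $C_0$-semigroup on $X$. Let $x\in X$ with $\sup_{h\in(0,h_0]}\big\|\frac{S(h)x-x}{h}\big\|<\infty$ for some $h_0>0$. Then the map $[0,\infty)\to X$, $t\mapsto S(t)x$ is locally Lipschitz continuous, i.e. for every $T>0$ there exists $L_T\ge0$ with $\|S(t)x-S(s)x\|\le L_T|t-s|$ for all $s,t\in[0,T]$.
   Context: An operator $T\colon X\to X$ is convex if $T(\lambda x+(1-\lambda)y)\le\lambda Tx+(1-\lambda)Ty$ for all $x,y\in X$, $\lambda\in[0,1]$, and bounded if $\sup_{\|x\|\le r}\|Tx\|<\infty$ for all $r>0$. A convex $C_0$-semigroup is a family $(S(t))_{t\ge0}$ of bounded convex operators $X\to X$ with $S(0)=\mathrm{id}$, $S(t+s)=S(t)S(s)$ for all $s,t\ge0$, and $S(t)x\to x$ as $t\downarrow0$ for all $x$. *)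

theory Defs
  imports "HOL-Analysis.Analysis"
begin

class banach_lattice = banach + ordered_real_vector + lattice +
  assumes lattice_norm_mono: "sup x (- x) \<le> sup y (- y) \<Longrightarrow> norm x \<le> norm y"

definition convex_operator :: "('a::banach_lattice \<Rightarrow> 'a) \<Rightarrow> bool" where
  "convex_operator T \<longleftrightarrow>
     (\<forall>x y. \<forall>l::real. 0 \<le> l \<and> l \<le> 1 \<longrightarrow>
        T (l *\<^sub>R x + (1 - l) *\<^sub>R y) \<le> l *\<^sub>R T x + (1 - l) *\<^sub>R T y)"

definition bounded_operator :: "('a::real_normed_vector \<Rightarrow> 'b::real_normed_vector) \<Rightarrow> bool" where
  "bounded_operator T \<longleftrightarrow> (\<forall>r>0. \<exists>C. \<forall>x. norm x \<le> r \<longrightarrow> norm (T x) \<le> C)"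

text \<open>A convex C0-semigroup, indexed by t \<ge> 0 (values of S at negative t are irrelevant).\<close>
definition convex_C0_semigroup :: "(real \<Rightarrow> 'a::banach_lattice \<Rightarrow> 'a) \<Rightarrow> bool" where
  "convex_C0_semigroup S \<longleftrightarrow>
     (\<forall>t\<ge>0. convex_operator (S t) \<and> bounded_operator (S t)) \<and>
     S 0 = id \<and>
     (\<forall>s\<ge>0. \<forall>t\<ge>0. S (t + s) = S t \<circ> S s) \<and>
     (\<forall>x. ((\<lambda>t. S t x) \<longlongrightarrow> x) (at_right 0))"

end

theory Submission
  imports Defs
begin



definition lmod :: "'a::banach_lattice \<Rightarrow> 'a" where "lmod a = sup a (- a)"

lemma lmod_ge: "(a::'a::banach_lattice) \<le> lmod a" "- a \<le> lmod a"
  by (auto simp: lmod_def)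

lemma lmod_nonneg: "0 \<le> lmod (a::'a::banach_lattice)"
proof -
  have "a + - a \<le> lmod a + lmod a" by (intro add_mono lmod_ge)
  hence "0 \<le> lmod a + lmod a" by simp
  hence "0 \<le> (1/2::real) *\<^sub>R (lmod a + lmod a)" by (intro scaleR_nonneg_nonneg) auto
  also have "(1/2::real) *\<^sub>R (lmod a + lmod a) = lmod a"
    by (metis field_sum_of_halves scaleR_add_left scaleR_one scaleR_right_distrib)
  finally show ?thesis .
qed

lemma lmod_of_nonneg: "0 \<le> (c::'a::banach_lattice) \<Longrightarrow> lmod c = c"
  unfolding lmod_def by (metis neg_le_0_iff_le order_trans sup.absorb1)

lemma norm_lmod: "norm (lmod (a::'a::banach_lattice)) = norm a"
proof -
  have e: "lmod (lmod a) = lmod a" by (simp add: lmod_of_nonneg lmod_nonneg)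
  show ?thesis
    using lattice_norm_mono[of a "lmod a"] lattice_norm_mono[of "lmod a" a] e
    unfolding lmod_def by (metis antisym order_refl)
qed

lemma sandwich_norm:
  fixes u a b :: "'a::banach_lattice"
  assumes "- a \<le> u" "u \<le> b"
  shows "norm u \<le> norm a + norm b"
proof -
  have "lmod u \<le> lmod a + lmod b"
    unfolding lmod_def[of u]
  proof (rule sup_least)
    have "u \<le> lmod b" using assms(2) lmod_ge(1)[of b] by order
    also have "\<dots> \<le> lmod a + lmod b" using lmod_nonneg[of a] by simp
    finally show "u \<le> lmod a + lmod b" .
    have "- u \<le> a" using assms(1) by (simp add: minus_le_iff)
    also have "\<dots> \<le> lmod a" by (rule lmod_ge)
    also have "\<dots> \<le> lmod a + lmod b" using lmod_nonneg[of b] by simp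
    finally show "- u \<le> lmod a + lmod b" .
  qed
  hence "lmod u \<le> lmod (lmod a + lmod b)"
    by (simp add: lmod_of_nonneg lmod_nonneg add_nonneg_nonneg)
  hence "norm u \<le> norm (lmod a + lmod b)"
    using lattice_norm_mono unfolding lmod_def by blast
  also have "\<dots> \<le> norm (lmod a) + norm (lmod b)" by (rule norm_triangle_ineq)
  finally show ?thesis by (simp add: norm_lmod)
qed



lemma convex_opD:
  "convex_operator T \<Longrightarrow> 0 \<le> l \<Longrightarrow> l \<le> 1 \<Longrightarrow>
     T (l *\<^sub>R x + (1 - l) *\<^sub>R y) \<le> l *\<^sub>R T x + (1 - l) *\<^sub>R T y"
  unfolding convex_operator_def by blast

lemma convex_half_step:
  fixes T :: "'a::banach_lattice \<Rightarrow> 'a"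
  assumes conv: "convex_operator T" and k: "k > 0"
  shows "T y' - T y \<le> (1/(1+k)) *\<^sub>R (T (y' + k *\<^sub>R (y' - y)) - T y)"
proof -
  define l where "l = 1/(1+k)"
  define z where "z = y' + k *\<^sub>R (y' - y)"
  have l1: "l + l * k = 1" using k by (simp add: l_def field_simps)
  have "l *\<^sub>R z + (1 - l) *\<^sub>R y = (l + l*k) *\<^sub>R y' + (1 - (l + l*k)) *\<^sub>R y"
    by (simp add: z_def algebra_simps)
  also have "\<dots> = y'" using l1 by simp
  finally have eq: "l *\<^sub>R z + (1 - l) *\<^sub>R y = y'" .
  have "0 \<le> l" "l \<le> 1" using k by (auto simp: l_def field_simps)
  from convex_opD[OF conv this, of z y] eq
  have "T y' \<le> l *\<^sub>R T z + (1 - l) *\<^sub>R T y" by simp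
  hence "T y' - T y \<le> l *\<^sub>R T z + (1 - l) *\<^sub>R T y - T y" by (rule diff_right_mono)
  also have "l *\<^sub>R T z + (1 - l) *\<^sub>R T y - T y = l *\<^sub>R (T z - T y)"
    by (simp add: algebra_simps)
  finally show ?thesis by (simp add: l_def z_def)
qed

lemma convex_lip:
  fixes T :: "'a::banach_lattice \<Rightarrow> 'a"
  assumes conv: "convex_operator T" and R: "R > 0"
    and bnd: "\<And>z. z \<in> cball p R \<Longrightarrow> norm (T z) \<le> C"
    and y: "y \<in> cball p (R/2)" and y': "y' \<in> cball p (R/2)"
  shows "norm (T y' - T y) \<le> (8*C/R) * norm (y' - y)"
proof (cases "y' = y")
  case True then show ?thesis by simp
next
  case False
  define d where "d = norm (y' - y)"
  have d: "d > 0" using False by (simp add: d_def)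
  have C: "C \<ge> 0" using bnd[of p] R by (meson centre_in_cball less_imp_le norm_ge_zero order_trans)
  define k where "k = R / (2*d)"
  have k: "k > 0" using d R by (simp add: k_def)
  define z where "z = y' + k *\<^sub>R (y' - y)"
  define z' where "z' = y + k *\<^sub>R (y - y')"
  have kd: "k * d = R/2" using d by (simp add: k_def)
  have zin: "z \<in> cball p R"
  proof -
    have "dist p z = norm ((y' - p) + k *\<^sub>R (y' - y))" by (simp add: z_def dist_norm algebra_simps norm_minus_commute)
    also have "\<dots> \<le> norm (y' - p) + norm (k *\<^sub>R (y' - y))" by (rule norm_triangle_ineq)
    also have "norm (k *\<^sub>R (y' - y)) = k * d" using k by (simp add: d_def)
    also have "norm (y' - p) \<le> R/2" using y' by (simp add: dist_norm norm_minus_commute)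
    finally show ?thesis using kd by simp
  qed
  have z'in: "z' \<in> cball p R"
  proof -
    have "dist p z' = norm ((y - p) + k *\<^sub>R (y - y'))" by (simp add: z'_def dist_norm algebra_simps norm_minus_commute)
    also have "\<dots> \<le> norm (y - p) + norm (k *\<^sub>R (y - y'))" by (rule norm_triangle_ineq)
    also have "norm (k *\<^sub>R (y - y')) = k * d" using k by (simp add: d_def norm_minus_commute)
    also have "norm (y - p) \<le> R/2" using y by (simp add: dist_norm norm_minus_commute)
    finally show ?thesis using kd by simp
  qed
  define l where "l = 1/(1+k)"
  have l: "l \<ge> 0" "l \<le> 2*d/R" using k d R by (auto simp: l_def k_def field_simps)
  have up: "T y' - T y \<le> l *\<^sub>R (T z - T y)"
    using convex_half_step[OF conv k, of y' y] by (simp add: l_def z_def)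
  have "T y - T y' \<le> l *\<^sub>R (T z' - T y')"
    using convex_half_step[OF conv k, of y y'] by (simp add: l_def z'_def)
  hence lo: "- (l *\<^sub>R (T z' - T y')) \<le> T y' - T y" by (simp add: minus_le_iff)
  have "norm (T y' - T y) \<le> norm (l *\<^sub>R (T z' - T y')) + norm (l *\<^sub>R (T z - T y))"
    by (rule sandwich_norm[OF lo up])
  also have "\<dots> = l * (norm (T z' - T y') + norm (T z - T y))"
    using l by (simp add: distrib_left)
  also have "norm (T z' - T y') + norm (T z - T y) \<le> 4 * C"
  proof -
    have yR: "y \<in> cball p R" "y' \<in> cball p R" using y y' R by auto
    have "norm (T z' - T y') \<le> norm (T z') + norm (T y')" by (rule norm_triangle_ineq4)
    moreover have "norm (T z - T y) \<le> norm (T z) + norm (T y)" by (rule norm_triangle_ineq4)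
    ultimately show ?thesis using bnd[OF zin] bnd[OF z'in] bnd[OF yR(1)] bnd[OF yR(2)] by linarith
  qed
  hence "l * (norm (T z' - T y') + norm (T z - T y)) \<le> l * (4*C)"
    using l by (intro mult_left_mono) auto
  also have "\<dots> \<le> (2*d/R) * (4*C)" using l C by (intro mult_right_mono) auto
  finally show ?thesis using R by (simp add: d_def field_simps)
qed



lemma baire_nat:
  fixes F :: "nat \<Rightarrow> 'a::banach set"
  assumes "\<And>n. closed (F n)" "(\<Union>n. F n) = UNIV"
  shows "\<exists>n. interior (F n) \<noteq> {}"
proof (rule ccontr)
  assume "\<not> ?thesis"
  hence "euclidean interior_of \<Union>(range F) = {}"
    using assms(1) by (intro Baire_category_alt) (auto simp: completely_metrizable_space_euclidean)
  thus False using assms(2) by simp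
qed

lemma convex_mid:
  fixes T :: "'a::banach_lattice \<Rightarrow> 'a"
  assumes "convex_operator T"
  shows "T z \<le> (1/2) *\<^sub>R (T u + T (2 *\<^sub>R z - u))"
proof -
  have "T ((1/2) *\<^sub>R u + (1 - 1/2) *\<^sub>R (2 *\<^sub>R z - u)) \<le> (1/2) *\<^sub>R T u + (1 - 1/2) *\<^sub>R T (2 *\<^sub>R z - u)"
    by (rule convex_opD[OF assms]) auto
  moreover have "(1/2::real) *\<^sub>R u + (1 - 1/2) *\<^sub>R (2 *\<^sub>R z - u) = z"
    by (simp add: algebra_simps)
  ultimately show ?thesis by (simp add: scaleR_add_right)
qed

lemma bounded_convex_lip:
  fixes T :: "'a::banach_lattice \<Rightarrow> 'a"
  assumes conv: "convex_operator T" and bd: "bounded_operator T" and R: "R > 0"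
  shows "\<exists>K\<ge>0. \<forall>y\<in>cball p R. \<forall>y'\<in>cball p R. norm (T y' - T y) \<le> K * norm (y' - y)"
proof -
  obtain C where C: "\<And>z. norm z \<le> norm p + 2*R \<Longrightarrow> norm (T z) \<le> C"
    using bd R unfolding bounded_operator_def
    by (metis add_nonneg_pos mult_pos_pos norm_ge_zero zero_less_numeral)
  have b: "norm (T z) \<le> C" if "z \<in> cball p (2*R)" for z
  proof -
    have "norm z \<le> norm p + norm (z - p)" by (metis add.commute diff_add_cancel norm_triangle_ineq)
    also have "norm (z - p) \<le> 2*R" using that by (simp add: dist_norm norm_minus_commute)
    finally show ?thesis by (intro C) simp
  qed
  have C0: "C \<ge> 0" using b[of p] R by (meson centre_in_cball norm_ge_zero order_trans less_imp_le mult_pos_pos zero_less_numeral)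
  show ?thesis
  proof (intro exI[of _ "8*C/(2*R)"] conjI ballI)
    show "0 \<le> 8*C/(2*R)" using C0 R by simp
    fix y y' assume "y \<in> cball p R" "y' \<in> cball p R"
    thus "norm (T y' - T y) \<le> 8*C/(2*R) * norm (y' - y)"
      using convex_lip[where T=T and R="2*R" and p=p and C=C and y=y and y'=y', OF conv _ b] R by simp
  qed
qed

lemma bounded_convex_cont:
  fixes T :: "'a::banach_lattice \<Rightarrow> 'a"
  assumes conv: "convex_operator T" and bd: "bounded_operator T"
  shows "continuous_on UNIV T"
proof (rule continuous_at_imp_continuous_on, rule ballI)
  fix p :: 'a
  obtain K where K: "K \<ge> 0" "\<forall>y\<in>cball p 1. \<forall>y'\<in>cball p 1. norm (T y' - T y) \<le> K * norm (y' - y)"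
    using bounded_convex_lip[OF conv bd, of 1 p] by auto
  have "K-lipschitz_on (cball p 1) T"
    using K by (auto simp: lipschitz_on_def dist_norm)
  hence "continuous_on (cball p 1) T" by (rule lipschitz_on_continuous_on)
  moreover have "p \<in> interior (cball p 1)"
    by (meson centre_in_ball interior_maximal ball_subset_cball open_ball zero_less_one subsetD)
  ultimately show "isCont T p" by (rule continuous_on_interior)
qed

lemma local_ubp:
  fixes T :: "nat \<Rightarrow> 'a::banach_lattice \<Rightarrow> 'a"
  assumes conv: "\<And>n. convex_operator (T n)" and cont: "\<And>n. continuous_on UNIV (T n)"
    and pw: "\<And>z. \<exists>B. \<forall>n. norm (T n z) \<le> B"
  shows "\<exists>r>0. \<exists>C. \<forall>n. \<forall>y\<in>cball p r. norm (T n y) \<le> C"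
proof -
  define F where "F m = (\<Inter>n. {z. norm (T n z) \<le> real m})" for m
  have "closed (F m)" for m
    unfolding F_def
    by (intro closed_INT ballI closed_Collect_le continuous_on_norm continuous_on_const cont)
  moreover have "z \<in> (\<Union>m. F m)" for z
  proof -
    obtain B where B: "\<forall>n. norm (T n z) \<le> B" using pw by blast
    have "\<forall>n. norm (T n z) \<le> real (nat \<lceil>B\<rceil>)"
      using B by (meson of_nat_ceiling order_trans)
    thus "z \<in> (\<Union>m. F m)" by (auto simp: F_def)
  qed
  hence "(\<Union>m. F m) = UNIV" by blast
  ultimately obtain N where "interior (F N) \<noteq> {}" using baire_nat by blast
  then obtain x0 where "x0 \<in> interior (F N)" by blast
  then obtain e where e: "e > 0" "cball x0 e \<subseteq> F N"
    by (meson open_contains_cball open_interior interior_subset order_trans)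
  hence bN: "norm (T n w) \<le> real N" if "w \<in> cball x0 e" for n w
    using that by (auto simp: F_def)
  define y0 where "y0 = 2 *\<^sub>R p - x0"
  obtain B1 where B1: "\<forall>n. norm (T n y0) \<le> B1" using pw by blast
  obtain B2 where B2: "\<forall>n. norm (T n p) \<le> B2" using pw by blast
  have wmem: "2 *\<^sub>R z - y0 \<in> cball x0 e" if "z \<in> cball p (e/2)" for z
  proof -
    have "dist x0 (2 *\<^sub>R z - y0) = norm (2 *\<^sub>R (z - p))"
      by (simp add: y0_def dist_norm algebra_simps norm_minus_commute)
    also have "\<dots> = 2 * dist p z" by (simp add: dist_norm norm_minus_commute)
    finally show ?thesis using that by simp
  qed
  have upper: "T n z \<le> (1/2) *\<^sub>R (T n y0 + T n (2 *\<^sub>R z - y0))" for n z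
    by (rule convex_mid[OF conv])
  have main: "\<forall>n. \<forall>y\<in>cball p (e/2). norm (T n y) \<le> B1 + real N + 2 * B2"
  proof (intro allI ballI)
    fix n y assume y: "y \<in> cball p (e/2)"
    define y' where "y' = 2 *\<^sub>R p - y"
    have e1: "p - (2 *\<^sub>R p - y) = y - p" by (simp add: scaleR_2)
    have "dist p y' = dist p y" unfolding y'_def dist_norm e1 by (simp add: norm_minus_commute)
    hence y': "y' \<in> cball p (e/2)" using y by simp
    define b where "b = (1/2) *\<^sub>R (T n y0 + T n (2 *\<^sub>R y - y0))"
    define b' where "b' = (1/2) *\<^sub>R (T n y0 + T n (2 *\<^sub>R y' - y0))"
    define a where "a = b' - 2 *\<^sub>R T n p"
    have ub: "T n y \<le> b" unfolding b_def by (rule upper)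
    have "T n p \<le> (1/2) *\<^sub>R (T n y + T n (2 *\<^sub>R p - y))" by (rule convex_mid[OF conv])
    hence "(2::real) *\<^sub>R T n p \<le> (2::real) *\<^sub>R ((1/2) *\<^sub>R (T n y + T n (2 *\<^sub>R p - y)))"
      by (intro scaleR_left_mono) auto
    hence "2 *\<^sub>R T n p \<le> T n y + T n y'"
      by (simp add: y'_def)
    moreover have "T n y' \<le> b'" unfolding b'_def by (rule upper)
    ultimately have "2 *\<^sub>R T n p \<le> T n y + b'" by (meson add_left_mono order_trans)
    hence "2 *\<^sub>R T n p - b' \<le> T n y" by (simp add: diff_le_eq)
    moreover have "- a = 2 *\<^sub>R T n p - b'" by (simp add: a_def)
    ultimately have lb: "- a \<le> T n y" by simp
    have nb: "norm b \<le> (B1 + real N)/2"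
    proof -
      have "norm b = (1/2) * norm (T n y0 + T n (2 *\<^sub>R y - y0))" by (simp add: b_def)
      also have "norm (T n y0 + T n (2 *\<^sub>R y - y0)) \<le> B1 + real N"
        using norm_triangle_ineq[of "T n y0" "T n (2 *\<^sub>R y - y0)"] B1[rule_format, of n] bN[OF wmem[OF y], of n] by linarith
      finally show ?thesis by simp
    qed
    have nb': "norm b' \<le> (B1 + real N)/2"
    proof -
      have "norm b' = (1/2) * norm (T n y0 + T n (2 *\<^sub>R y' - y0))" by (simp add: b'_def)
      also have "norm (T n y0 + T n (2 *\<^sub>R y' - y0)) \<le> B1 + real N"
        using norm_triangle_ineq[of "T n y0" "T n (2 *\<^sub>R y' - y0)"] B1[rule_format, of n] bN[OF wmem[OF y'], of n] by linarith
      finally show ?thesis by simp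
    qed
    have na: "norm a \<le> (B1 + real N)/2 + 2 * B2"
      using norm_triangle_ineq4[of b' "2 *\<^sub>R T n p"] nb' B2[rule_format, of n] unfolding a_def by (simp, linarith)
    show "norm (T n y) \<le> B1 + real N + 2 * B2"
      using sandwich_norm[OF lb ub] na nb by (simp add: field_simps)
  qed
  show ?thesis using main e(1) by (intro exI[of _ "e/2"]) auto
qed



lemma sg_facts:
  assumes "convex_C0_semigroup S"
  shows "\<And>t. t \<ge> 0 \<Longrightarrow> convex_operator (S t)" "\<And>t. t \<ge> 0 \<Longrightarrow> bounded_operator (S t)"
    "S 0 = id" "\<And>s t. s \<ge> 0 \<Longrightarrow> t \<ge> 0 \<Longrightarrow> S (t + s) = S t \<circ> S s"
    "\<And>x. ((\<lambda>t. S t x) \<longlongrightarrow> x) (at_right 0)"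
  using assms unfolding convex_C0_semigroup_def by auto

lemma seq_bounded:
  fixes S :: "real \<Rightarrow> 'a::banach_lattice \<Rightarrow> 'a"
  assumes sg: "convex_C0_semigroup S" and tt: "\<And>n. tt n \<in> {0..1/(real n+1)}"
  shows "\<exists>B. \<forall>n. norm (S (tt n) z) \<le> B"
proof -
  have lim: "(\<lambda>n. S (tt n) z) \<longlonglongrightarrow> z"
    unfolding lim_sequentially
  proof (intro allI impI)
    fix e :: real assume e: "e > 0"
    have "eventually (\<lambda>t. dist (S t z) z < e) (at_right 0)"
      using tendstoD[OF sg_facts(5)[OF sg, of z] e] .
    then obtain b where b: "b > 0" "\<And>t. t > 0 \<Longrightarrow> t < b \<Longrightarrow> dist (S t z) z < e"
      using eventually_at_right[of "0::real" 1] by auto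
    obtain no :: nat where no: "1/b < no" using reals_Archimedean2 by blast
    show "\<exists>no. \<forall>n\<ge>no. dist (S (tt n) z) z < e"
    proof (intro exI allI impI)
      fix n assume "no \<le> n"
      hence "1/b < real n + 1" using no by linarith
      hence "1/(real n+1) < b" using b(1) by (simp add: field_simps)
      hence lt: "tt n < b" using tt[of n] by auto
      show "dist (S (tt n) z) z < e"
      proof (cases "tt n = 0")
        case True thus ?thesis using sg_facts(3)[OF sg] e by simp
      next
        case False thus ?thesis using tt[of n] lt b(2) by auto
      qed
    qed
  qed
  hence "Bseq (\<lambda>n. S (tt n) z)" using convergent_imp_Bseq convergentI by blast
  thus ?thesis unfolding Bseq_def by blast
qed

lemma small_time_bound:
  fixes S :: "real \<Rightarrow> 'a::banach_lattice \<Rightarrow> 'a"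
  assumes sg: "convex_C0_semigroup S"
  shows "\<exists>r>0. \<exists>\<delta>>0. \<exists>C. \<forall>t\<in>{0..\<delta>}. \<forall>y\<in>cball x r. norm (S t y) \<le> C"
proof (rule ccontr)
  assume H: "\<not> ?thesis"
  have "\<forall>n::nat. \<exists>t. \<exists>y. t \<in> {0..1/(real n+1)} \<and> y \<in> cball x (1/(real n+1)) \<and> norm (S t y) > real n"
  proof
    fix n :: nat
    have pos: "1/(real n+1) > 0" by simp
    have "\<not> (\<forall>t\<in>{0..1/(real n+1)}. \<forall>y\<in>cball x (1/(real n+1)). norm (S t y) \<le> real n)"
    proof
      assume A: "\<forall>t\<in>{0..1/(real n+1)}. \<forall>y\<in>cball x (1/(real n+1)). norm (S t y) \<le> real n"
      have "\<exists>r>0. \<exists>\<delta>>0. \<exists>C. \<forall>t\<in>{0..\<delta>}. \<forall>y\<in>cball x r. norm (S t y) \<le> C"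
        by (rule exI[of _ "1/(real n+1)"], rule conjI[OF pos], rule exI[of _ "1/(real n+1)"], rule conjI[OF pos], rule exI[of _ "real n"], rule A)
      thus False using H by blast
    qed
    thus "\<exists>t y. t \<in> {0..1/(real n+1)} \<and> y \<in> cball x (1/(real n+1)) \<and> norm (S t y) > real n"
      by (fastforce simp: not_le)
  qed
  hence "\<exists>tt. \<forall>n. \<exists>y. tt n \<in> {0..1/(real n+1)} \<and> y \<in> cball x (1/(real n+1)) \<and> norm (S (tt n) y) > real n"
    by (rule choice)
  then obtain tt where "\<forall>n. \<exists>y. tt n \<in> {0..1/(real n+1)} \<and> y \<in> cball x (1/(real n+1)) \<and> norm (S (tt n) y) > real n"
    by blast
  hence "\<exists>yy. \<forall>n. tt n \<in> {0..1/(real n+1)} \<and> yy n \<in> cball x (1/(real n+1)) \<and> norm (S (tt n) (yy n)) > real n"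
    by (rule choice)
  then obtain yy where P0: "\<forall>n. tt n \<in> {0..1/(real n+1)} \<and> yy n \<in> cball x (1/(real n+1)) \<and> norm (S (tt n) (yy n)) > real n"
    by blast
  have P: "\<And>n. tt n \<in> {0..1/(real n+1)}" "\<And>n. yy n \<in> cball x (1/(real n+1))"
      "\<And>n. norm (S (tt n) (yy n)) > real n"
    using P0 by blast+
  have conv: "convex_operator (S (tt n))" for n using sg_facts(1)[OF sg] P(1)[of n] by auto
  have cont: "continuous_on UNIV (S (tt n))" for n
    using bounded_convex_cont[OF conv] sg_facts(2)[OF sg] P(1)[of n] by auto
  obtain r C where rC: "r > 0" "\<forall>n. \<forall>y\<in>cball x r. norm (S (tt n) y) \<le> C"
    using local_ubp[of "\<lambda>n. S (tt n)", OF conv cont seq_bounded[OF sg P(1)], of x] by blast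
  obtain n :: nat where n: "n > max C (1/r)" using reals_Archimedean2 by blast
  have "1/(real n+1) \<le> r"
  proof -
    have "1/r < real n + 1" using n by auto
    thus ?thesis using rC(1) by (simp add: field_simps)
  qed
  hence "yy n \<in> cball x r" using P(2)[of n] by auto
  hence "norm (S (tt n) (yy n)) \<le> C" using rC(2) by blast
  thus False using P(3)[of n] n by auto
qed



theorem proposition2p7:
  fixes S :: "real \<Rightarrow> 'a::banach_lattice \<Rightarrow> 'a" and x :: 'a
  assumes "convex_C0_semigroup S"
    and "\<exists>h0>0. \<exists>M. \<forall>h\<in>{0<..h0}. norm ((1 / h) *\<^sub>R (S h x - x)) \<le> M"
  shows "\<forall>T>0. \<exists>L\<ge>0. \<forall>s\<in>{0..T}. \<forall>t\<in>{0..T}. norm (S t x - S s x) \<le> L * \<bar>t - s\<bar>"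
proof (intro allI impI)
  fix T :: real assume T: "T > 0"
  note sg = assms(1)
  obtain h0 M where h0: "h0 > 0" and hM: "\<forall>h\<in>{0<..h0}. norm ((1 / h) *\<^sub>R (S h x - x)) \<le> M"
    using assms(2) by blast
  define M' where "M' = \<bar>M\<bar>"
  have M': "M' \<ge> 0" by (simp add: M'_def)
  have orb: "norm (S h x - x) \<le> M' * h" if "0 \<le> h" "h \<le> h0" for h
  proof (cases "h = 0")
    case True thus ?thesis using sg_facts(3)[OF sg] by simp
  next
    case False
    hence h: "h > 0" using that by simp
    have "(1/h) * norm (S h x - x) \<le> M" using hM h that by auto
    hence "norm (S h x - x) \<le> M * h" using h by (simp add: field_simps)
    thus ?thesis unfolding M'_def using h by (smt (verit) mult_right_mono abs_ge_self)
  qed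
  obtain r \<delta> C where r: "r > 0" and \<delta>: "\<delta> > 0" and bC: "\<forall>t\<in>{0..\<delta>}. \<forall>y\<in>cball x r. norm (S t y) \<le> C"
    using small_time_bound[OF sg, of x] by blast
  define Lx where "Lx = \<bar>8*C/r\<bar>"
  have Lx: "Lx \<ge> 0" by (simp add: Lx_def)
  have lipx: "norm (S t y' - S t y) \<le> Lx * norm (y' - y)"
    if "t \<in> {0..\<delta>}" "y \<in> cball x (r/2)" "y' \<in> cball x (r/2)" for t y y'
  proof -
    have "norm (S t y' - S t y) \<le> (8*C/r) * norm (y' - y)"
      using convex_lip[OF sg_facts(1)[OF sg] r _ that(2,3), of t C] that(1) bC by auto
    also have "\<dots> \<le> Lx * norm (y' - y)"
    proof (rule mult_right_mono)
      show "8*C/r \<le> Lx" unfolding Lx_def by (rule abs_ge_self)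
    qed simp
    finally show ?thesis .
  qed
  define r1 where "r1 = min (r/2) (1/(2*(Lx+1)))"
  have r1: "r1 > 0" "r1 \<le> r/2" "Lx * r1 \<le> 1/2"
  proof -
    show "r1 > 0" using r Lx by (simp add: r1_def)
    show "r1 \<le> r/2" by (simp add: r1_def)
    have "Lx * r1 \<le> Lx * (1/(2*(Lx+1)))" using Lx by (intro mult_left_mono) (auto simp: r1_def)
    also have "\<dots> \<le> 1/2" using Lx by (simp add: field_simps)
    finally show "Lx * r1 \<le> 1/2" .
  qed
  define s1 where "s1 = min \<delta> (min h0 (1/(2*(M'+1))))"
  have s1: "s1 > 0" "s1 \<le> \<delta>" "s1 \<le> h0" "M' * s1 \<le> 1/2"
  proof -
    show "s1 > 0" using \<delta> h0 M' by (simp add: s1_def)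
    show "s1 \<le> \<delta>" "s1 \<le> h0" by (auto simp: s1_def)
    have "M' * s1 \<le> M' * (1/(2*(M'+1)))" using M' by (intro mult_left_mono) (auto simp: s1_def)
    also have "\<dots> \<le> 1/2" using M' by (simp add: field_simps)
    finally show "M' * s1 \<le> 1/2" .
  qed
  have into: "S s y \<in> cball x 1" if "s \<in> {0..s1}" "y \<in> cball x r1" for s y
  proof -
    have xin: "x \<in> cball x (r/2)" using r by simp
    have yin: "y \<in> cball x (r/2)" using that(2) r1 by auto
    have "dist x (S s y) = norm ((S s y - S s x) + (S s x - x))" by (simp add: dist_norm norm_minus_commute)
    also have "\<dots> \<le> norm (S s y - S s x) + norm (S s x - x)" by (rule norm_triangle_ineq)
    also have "norm (S s y - S s x) \<le> Lx * norm (y - x)"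
      using lipx[OF _ xin yin, of s] that(1) s1 by auto
    also have "\<dots> \<le> Lx * r1"
      using that(2) Lx by (intro mult_left_mono) (auto simp: dist_norm norm_minus_commute)
    also have "norm (S s x - x) \<le> M' * s" using orb[of s] that(1) s1 by auto
    also have "M' * s \<le> M' * s1" using that(1) M' by (intro mult_left_mono) auto
    finally show ?thesis using r1(3) s1(4) by simp
  qed
  have "\<forall>a. \<exists>K. a \<ge> 0 \<longrightarrow> K \<ge> 0 \<and> (\<forall>y\<in>cball x 1. \<forall>y'\<in>cball x 1. norm (S a y' - S a y) \<le> K * norm (y' - y))"
    using bounded_convex_lip[OF sg_facts(1)[OF sg] sg_facts(2)[OF sg], of _ 1 x] by auto
  then obtain Kf where Kf: "\<And>a. a \<ge> 0 \<Longrightarrow> Kf a \<ge> 0"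
    "\<And>a y y'. a \<ge> 0 \<Longrightarrow> y \<in> cball x 1 \<Longrightarrow> y' \<in> cball x 1 \<Longrightarrow> norm (S a y' - S a y) \<le> Kf a * norm (y' - y)"
    by metis
  define Nn where "Nn = nat \<lceil>T/s1\<rceil>"
  define KT where "KT = (\<Sum>k\<le>Nn. Kf (real k * s1))"
  have KT: "KT \<ge> 0" unfolding KT_def using Kf(1) s1 by (intro sum_nonneg) auto
  have lipT: "norm (S t y' - S t y) \<le> KT * Lx * norm (y' - y)"
    if "t \<in> {0..T}" "y \<in> cball x r1" "y' \<in> cball x r1" for t y y'
  proof -
    define k where "k = nat \<lfloor>t/s1\<rfloor>"
    define a where "a = real k * s1"
    have t0: "t \<ge> 0" using that(1) by simp
    have ka: "real k = of_int \<lfloor>t/s1\<rfloor>" using t0 s1 by (simp add: k_def)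
    have a_le: "a \<le> t"
    proof -
      have "real k \<le> t/s1" using ka by linarith
      thus ?thesis using s1 by (simp add: a_def field_simps)
    qed
    have a_gt: "t - a < s1"
    proof -
      have "t/s1 < real k + 1" using ka by linarith
      thus ?thesis using s1 by (simp add: a_def field_simps)
    qed
    have a0: "a \<ge> 0" using s1 by (simp add: a_def)
    have kN: "k \<le> Nn"
    proof -
      have "t/s1 \<le> T/s1" using that(1) s1 by (simp add: divide_right_mono)
      thus ?thesis unfolding k_def Nn_def by (meson ceiling_mono floor_le_ceiling nat_mono order_trans)
    qed
    have split: "S t = S a \<circ> S (t - a)"
      using sg_facts(4)[OF sg, of "t - a" a] a_le a0 by simp
    have u: "S (t - a) y \<in> cball x 1" "S (t - a) y' \<in> cball x 1"
      using into[of "t - a"] that a_le a_gt by auto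
    have "norm (S t y' - S t y) = norm (S a (S (t - a) y') - S a (S (t - a) y))" by (simp add: split)
    also have "\<dots> \<le> Kf a * norm (S (t - a) y' - S (t - a) y)" by (rule Kf(2)[OF a0 u(1) u(2)])
    also have "\<dots> \<le> Kf a * (Lx * norm (y' - y))"
    proof (rule mult_left_mono[OF _ Kf(1)[OF a0]])
      show "norm (S (t - a) y' - S (t - a) y) \<le> Lx * norm (y' - y)"
        using lipx[of "t - a" y y'] that r1 a_le a_gt s1 by auto
    qed
    also have "\<dots> \<le> KT * (Lx * norm (y' - y))"
    proof (rule mult_right_mono)
      show "Kf a \<le> KT" unfolding KT_def a_def
        using kN Kf(1) s1 by (intro member_le_sum) auto
    qed (use Lx in auto)
    finally show ?thesis by (simp add: mult.assoc)
  qed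
  define h1 where "h1 = min s1 (r1/(M'+1))"
  have h1: "h1 > 0" "h1 \<le> s1" "M' * h1 \<le> r1"
  proof -
    show "h1 > 0" using s1 r1 M' by (simp add: h1_def)
    show "h1 \<le> s1" by (simp add: h1_def)
    have "M' * h1 \<le> M' * (r1/(M'+1))" using M' by (intro mult_left_mono) (auto simp: h1_def)
    also have "\<dots> \<le> r1" using M' r1 by (simp add: field_simps)
    finally show "M' * h1 \<le> r1" .
  qed
  define L where "L = KT * Lx * M'"
  have L: "L \<ge> 0" using KT Lx M' by (simp add: L_def)
  have step: "norm (S (t + h) x - S t x) \<le> L * h" if "t \<in> {0..T}" "0 \<le> h" "h \<le> h1" for t h
  proof -
    have hx: "norm (S h x - x) \<le> M' * h" using orb[of h] that h1 s1 by auto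
    have "S h x \<in> cball x r1"
    proof -
      have "M' * h \<le> M' * h1" using that M' by (intro mult_left_mono) auto
      thus ?thesis using hx h1 by (simp add: dist_norm norm_minus_commute)
    qed
    moreover have "x \<in> cball x r1" using r1 by simp
    ultimately have "norm (S t (S h x) - S t x) \<le> KT * Lx * norm (S h x - x)"
      using lipT[OF that(1)] by blast
    also have "\<dots> \<le> KT * Lx * (M' * h)" using hx KT Lx by (intro mult_left_mono) auto
    finally show ?thesis
      using sg_facts(4)[OF sg, of h t] that by (simp add: L_def mult.assoc)
  qed
  have chain: "\<forall>s t. 0 \<le> s \<and> s \<le> t \<and> t \<le> T \<and> t - s \<le> real n * h1 \<longrightarrow> norm (S t x - S s x) \<le> L * (t - s)" for n
  proof (induction n)
    case 0
    show ?case
    proof (intro allI impI)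
      fix s t assume "0 \<le> s \<and> s \<le> t \<and> t \<le> T \<and> t - s \<le> real 0 * h1"
      hence "t = s" by simp
      thus "norm (S t x - S s x) \<le> L * (t - s)" by simp
    qed
  next
    case (Suc n)
    show ?case
    proof (intro allI impI)
      fix s t assume st: "0 \<le> s \<and> s \<le> t \<and> t \<le> T \<and> t - s \<le> real (Suc n) * h1"
      show "norm (S t x - S s x) \<le> L * (t - s)"
      proof (cases "t - s \<le> h1")
        case True
        thus ?thesis using step[of s "t - s"] st by auto
      next
        case False
        define s2 where "s2 = s + h1"
        have "norm (S t x - S s2 x) \<le> L * (t - s2)"
        proof -
          have "0 \<le> s2 \<and> s2 \<le> t \<and> t \<le> T \<and> t - s2 \<le> real n * h1"
            using st False h1 by (auto simp: s2_def algebra_simps)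
          thus ?thesis using Suc.IH by blast
        qed
        moreover have "norm (S s2 x - S s x) \<le> L * h1"
          using step[of s h1] st h1 by (auto simp: s2_def)
        moreover have "norm (S t x - S s x) \<le> norm (S t x - S s2 x) + norm (S s2 x - S s x)"
          by (rule norm_diff_triangle_ineq[of "S t x" "S s2 x" "S s2 x" "S s x", simplified])
        ultimately show ?thesis by (simp add: s2_def algebra_simps)
      qed
    qed
  qed
  have ord: "norm (S t x - S s x) \<le> L * (t - s)" if "0 \<le> s" "s \<le> t" "t \<le> T" for s t
  proof -
    define n where "n = nat \<lceil>(t - s)/h1\<rceil>"
    have "(t - s)/h1 \<le> real n" unfolding n_def by linarith
    hence "t - s \<le> real n * h1" using h1 by (simp add: field_simps)
    thus ?thesis using chain[of n] that by blast
  qed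
  show "\<exists>L\<ge>0. \<forall>s\<in>{0..T}. \<forall>t\<in>{0..T}. norm (S t x - S s x) \<le> L * \<bar>t - s\<bar>"
  proof (intro exI[of _ L] conjI ballI)
    show "L \<ge> 0" by (rule L)
    fix s t assume s: "s \<in> {0..T}" and t: "t \<in> {0..T}"
    show "norm (S t x - S s x) \<le> L * \<bar>t - s\<bar>"
    proof (cases "s \<le> t")
      case True thus ?thesis using ord[of s t] s t by auto
    next
      case False
      hence "norm (S s x - S t x) \<le> L * (s - t)" using ord[of t s] s t by auto
      thus ?thesis using False by (simp add: norm_minus_commute)
    qed
  qed
qed

end
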